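(* Let $t$ and $m$ be positive integers. Then for every positive integer $n$, \[ \sum_{s=0}^{\infty}p_{mt,t}\!\left(n-\tfrac{s(3s-1)}{2}\right) + \sum_{s=1}^{\infty}p_{mt,t}\!\left(n-\tfrac{s(3s+1)}{2}\right)\equiv \begin{cases} 1 \pmod{2}, & \text{if } n=\tfrac{1}{2}(mk^{2} -(m-2)k)t \text{ for some positive integer } k,\\ 0\pmod{2}, & \text{otherwise}. \end{cases} \]
   Context: A partition $\lambda$ of a non-negative integer $n$ is a non-increasing sequence of positive integers (its parts) summing to $n$. For positive integers $A$ and $a$, $\mathrm{mex}_{A,a}(\lambda)$ denotes the smallest positive integer congruent to $a$ modulo $A$ that is not a part of $\lambda$. Then $p_{A,a}(n)$ denotes the number of partitions $\lambda$ of $n$ satisfying $\mathrm{mex}_{A,a}(\lambda)\equiv a \pmod{2A}$. By convention $p_{A,a}(n)=0$ for negative integers $n$ (so the sums are finite). *)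

theory Defs
  imports "HOL-Analysis.Analysis" "HOL-Library.Multiset"
begin

definition partitions :: "nat \<Rightarrow> nat multiset set" where
  "partitions n = {M. (\<forall>x \<in># M. 0 < x) \<and> sum_mset M = n}"

definition mex :: "nat \<Rightarrow> nat \<Rightarrow> nat multiset \<Rightarrow> nat" where
  "mex A a M = (LEAST k. 0 < k \<and> k mod A = a mod A \<and> k \<notin># M)"

definition p_mex :: "nat \<Rightarrow> nat \<Rightarrow> int \<Rightarrow> nat" where
  "p_mex A a n = (if n < 0 then 0 else
     card {M \<in> partitions (nat n). mex A a M mod (2*A) = a mod (2*A)})"

end

theory Submission
  imports Defs
begin


lemma inv_parity:
  assumes "finite X" and "\<And>x. x \<in> X \<Longrightarrow> f x \<in> X" and "\<And>x. x \<in> X \<Longrightarrow> f (f x) = x"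
  shows "card X mod 2 = card {x\<in>X. f x = x} mod 2"
  using assms
proof (induction "card X" arbitrary: X rule: less_induct)
  case less
  show ?case
  proof (cases "\<exists>x\<in>X. f x \<noteq> x")
    case False
    then have "{x\<in>X. f x = x} = X" by auto
    then show ?thesis by simp
  next
    case True
    then obtain x where x: "x \<in> X" "f x \<noteq> x" by auto
    define Y where "Y = X - {x, f x}"
    have fx: "f x \<in> X" using less x by auto
    have sub: "{x, f x} \<subseteq> X" using x fx by auto
    have c2: "card {x, f x} = 2" using x by auto
    have cY: "card Y = card X - 2" unfolding Y_def using sub c2 less(2)
      by (simp add: card_Diff_subset)
    have cX: "card X \<ge> 2" using card_mono[OF less(2) sub] c2 by simp
    have fY: "\<And>y. y \<in> Y \<Longrightarrow> f y \<in> Y" 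
    proof -
      fix y assume y: "y \<in> Y"
      then have "y \<in> X" "y \<noteq> x" "y \<noteq> f x" unfolding Y_def by auto
      then show "f y \<in> Y" unfolding Y_def using less(3,4) x by (metis Diff_iff insertE empty_iff)
    qed
    have "card Y mod 2 = card {y\<in>Y. f y = y} mod 2"
      by (rule less(1)) (use cY cX less Y_def fY in auto)
    moreover have "{y\<in>Y. f y = y} = {x\<in>X. f x = x}" unfolding Y_def using x less(4) by auto
    ultimately show ?thesis using cY cX by (metis le_add_diff_inverse2 mod_add_self2)
  qed
qed

definition sig :: "nat set \<Rightarrow> nat" where "sig S = (LEAST k. Max S - k \<notin> S)"

definition frank :: "nat set \<Rightarrow> nat set" where
"frank S = (if S = {} then S else
   if Min S \<le> sig S then (if Min S = Max S - Min S + 1 then S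
        else insert (Max S + 1) (S - {Min S, Max S - Min S + 1}))
   else (if S = {sig S + 1..2 * sig S} then S
        else insert (Max S - sig S) (insert (sig S) (S - {Max S}))))"

lemma sig_props:
  assumes "finite S" "S \<noteq> {}" "0 \<notin> S"
  shows "Max S - sig S \<notin> S" "\<And>k. k < sig S \<Longrightarrow> Max S - k \<in> S" "1 \<le> sig S" "sig S \<le> Max S"
proof -
  have ex: "\<exists>k. Max S - k \<notin> S" using assms(3) by (intro exI[of _ "Max S"]) simp
  show 1: "Max S - sig S \<notin> S" unfolding sig_def by (rule LeastI_ex[OF ex])
  show "\<And>k. k < sig S \<Longrightarrow> Max S - k \<in> S" unfolding sig_def using not_less_Least by blast
  have "Max S \<in> S" using assms by simp
  then show "1 \<le> sig S" using 1 by (cases "sig S") auto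
  show "sig S \<le> Max S" unfolding sig_def using assms(3) by (intro Least_le) simp
qed

lemma sig_eq:
  assumes "\<And>k. k < s \<Longrightarrow> Max S - k \<in> S" "Max S - s \<notin> S"
  shows "sig S = s"
  unfolding sig_def
  by (rule Least_equality) (use assms(2) in simp, use assms(1) in \<open>meson not_le\<close>)


lemma frank_A:
  assumes fin: "finite S" and ne: "S \<noteq> {}" and z: "0 \<notin> S"
    and A: "Min S \<le> sig S" and nex: "Min S \<noteq> Max S - Min S + 1"
  defines "S' \<equiv> insert (Max S + 1) (S - {Min S, Max S - Min S + 1})"
  shows "finite S'" "S' \<noteq> {}" "0 \<notin> S'" "sum id S' = sum id S" "frank S' = S"
proof -
  define mn where "mn = Min S"
  define mx where "mx = Max S"
  have mnS: "mn \<in> S" and mxS: "mx \<in> S" using fin ne by (auto simp: mn_def mx_def)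
  have le: "\<And>y. y \<in> S \<Longrightarrow> mn \<le> y \<and> y \<le> mx" using fin by (auto simp: mn_def mx_def)
  have mn1: "mn \<ge> 1" using mnS z by (cases mn) auto
  have mnmx: "mn \<le> mx" using le mnS by auto
  have run: "\<And>k. k < mn \<Longrightarrow> mx - k \<in> S" using sig_props(2)[OF fin ne z] A
    unfolding mn_def mx_def by auto
  have eqb: "mx - (mn - 1) = mx - mn + 1" using mn1 mnmx by simp
  have bS: "mx - mn + 1 \<in> S" using run[of "mn - 1"] mn1 unfolding eqb by simp
  have lt: "mn < mx - mn + 1" using le[OF bS] nex unfolding mn_def mx_def by auto
  have S'_def2: "S' = insert (mx + 1) (S - {mn, mx - mn + 1})" unfolding S'_def mn_def mx_def ..
  show finS': "finite S'" unfolding S'_def2 using fin by simp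
  show "S' \<noteq> {}" unfolding S'_def2 by simp
  show "0 \<notin> S'" unfolding S'_def2 using z by simp
  have notin: "mx + 1 \<notin> S" using le by fastforce
  have "sum id S = mn + (mx - mn + 1) + sum id (S - {mn, mx - mn + 1})"
  proof -
    have "sum id S = id mn + sum id (S - {mn})" using sum.remove[OF fin mnS] .
    also have "sum id (S - {mn}) = id (mx - mn + 1) + sum id (S - {mn} - {mx - mn + 1})"
      by (rule sum.remove) (use fin bS lt in auto)
    finally show ?thesis by (simp add: Diff_insert2[symmetric] insert_commute)
  qed
  moreover have "sum id S' = (mx + 1) + sum id (S - {mn, mx - mn + 1})"
    unfolding S'_def2 using fin notin by simp
  ultimately show "sum id S' = sum id S" using lt by simp
  have mxS': "Max S' = mx + 1" unfolding S'_def2 using fin le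
    by (intro Max_eqI) (auto, meson le_Suc_eq)
  have sigS': "sig S' = mn"
  proof (rule sig_eq)
    fix k assume k: "k < mn"
    show "Max S' - k \<in> S'"
    proof (cases k)
      case 0 then show ?thesis unfolding mxS' unfolding S'_def2 by simp
    next
      case (Suc k')
      have "mx - k' \<in> S" using run[of k'] k Suc by simp
      moreover have "mx - k' > mx - mn + 1" using k Suc mnmx by linarith
      ultimately show ?thesis unfolding mxS' unfolding S'_def2 using Suc lt by auto
    qed
  next
    show "Max S' - mn \<notin> S'" unfolding mxS' unfolding S'_def2 using mn1 mnmx by auto
  qed
  have minS': "\<And>y. y \<in> S' \<Longrightarrow> mn < y" unfolding S'_def2 using le lt mnmx
    by (auto simp: order_le_less)
  have MinS': "Min S' > mn" using minS' finS' \<open>S' \<noteq> {}\<close> by simp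
  have nexB: "S' \<noteq> {sig S' + 1..2 * sig S'}"
  proof
    assume eq: "S' = {sig S' + 1..2 * sig S'}"
    have "mx + 1 \<in> S'" unfolding S'_def2 by simp
    then have "mx + 1 \<le> 2 * mn" using eq sigS' by auto
    moreover have "2 * mn \<in> S'" using eq sigS' mn1 by auto
    then have "2 * mn \<le> mx + 1" using finS' mxS' by (metis Max_ge)
    ultimately have "mx - mn + 1 = mn" by linarith
    then show False using lt by simp
  qed
  have hback: "insert (Max S' - sig S') (insert (sig S') (S' - {Max S'})) = S"
  proof -
    have "S' - {Max S'} = S - {mn, mx - mn + 1}" unfolding mxS' unfolding S'_def2 using notin by auto
    moreover have "Max S' - sig S' = mx - mn + 1" unfolding mxS' sigS' using mnmx by simp
    ultimately show ?thesis using bS mnS unfolding sigS' by auto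
  qed
  show "frank S' = S" unfolding frank_def using \<open>S' \<noteq> {}\<close> MinS' sigS' nexB hback by auto
qed


lemma frank_B:
  assumes fin: "finite S" and ne: "S \<noteq> {}" and z: "0 \<notin> S"
    and B: "\<not> Min S \<le> sig S" and nex: "S \<noteq> {sig S + 1..2 * sig S}"
  defines "S' \<equiv> insert (Max S - sig S) (insert (sig S) (S - {Max S}))"
  shows "finite S'" "S' \<noteq> {}" "0 \<notin> S'" "sum id S' = sum id S" "frank S' = S"
proof -
  define mn where "mn = Min S"
  define mx where "mx = Max S"
  define sg where "sg = sig S"
  have mnS: "mn \<in> S" and mxS: "mx \<in> S" using fin ne by (auto simp: mn_def mx_def)
  have le: "\<And>y. y \<in> S \<Longrightarrow> mn \<le> y \<and> y \<le> mx" using fin by (auto simp: mn_def mx_def)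
  have mnmx: "mn \<le> mx" using le mnS by auto
  have run: "\<And>k. k < sg \<Longrightarrow> mx - k \<in> S" using sig_props(2)[OF fin ne z]
    unfolding sg_def mx_def by auto
  have gap: "mx - sg \<notin> S" using sig_props(1)[OF fin ne z] unfolding sg_def mx_def by auto
  have sg1: "1 \<le> sg" using sig_props(3)[OF fin ne z] unfolding sg_def .
  have sgmn: "sg < mn" using B unfolding sg_def mn_def by simp
  have big: "sg < mx - sg"
  proof (cases "\<exists>y\<in>S. y < mx - sg")
    case True
    then obtain y where "y \<in> S" "y < mx - sg" by auto
    then show ?thesis using le sgmn by fastforce
  next
    case False
    then have ge: "\<And>y. y \<in> S \<Longrightarrow> mx - sg + 1 \<le> y" using gap
      by (metis Suc_eq_plus1 le_neq_implies_less not_le Suc_leI)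
    have allS: "S = {mx - sg + 1..mx}"
    proof
      show "S \<subseteq> {mx - sg + 1..mx}" using ge le by auto
      show "{mx - sg + 1..mx} \<subseteq> S"
      proof
        fix y assume y: "y \<in> {mx - sg + 1..mx}"
        then have "mx - (mx - y) = y" by auto
        moreover have "mx - y < sg" using y by auto
        ultimately show "y \<in> S" using run[of "mx - y"] by simp
      qed
    qed
    have sgmx: "sg \<le> mx" using sig_props(4)[OF fin ne z] unfolding sg_def mx_def .
    have "mx - sg + 1 \<in> S" using allS sgmx sg1 by auto
    then have "mn = mx - sg + 1" using ge[OF mnS] le by (meson le_antisym)
    then have "mx - sg \<ge> sg" using sgmn by linarith
    moreover have "mx - sg \<noteq> sg"
    proof
      assume "mx - sg = sg"
      then have "S = {sg + 1..2 * sg}" using allS sg1 by (metis mult_2 add_diff_cancel_left' le_add_diff_inverse2 diff_le_self)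
      then show False using nex unfolding sg_def by simp
    qed
    ultimately show ?thesis by simp
  qed
  have S'_def2: "S' = insert (mx - sg) (insert sg (S - {mx}))" unfolding S'_def mx_def sg_def ..
  show finS': "finite S'" unfolding S'_def2 using fin by simp
  show "S' \<noteq> {}" unfolding S'_def2 by simp
  show "0 \<notin> S'" unfolding S'_def2 using z sg1 big by auto
  have sgnot: "sg \<notin> S" using le sgmn by fastforce
  have "sum id S = mx + sum id (S - {mx})" using sum.remove[OF fin mxS, of id] by simp
  moreover have "sum id S' = (mx - sg) + (sg + sum id (S - {mx}))"
    unfolding S'_def2 using fin gap sgnot big by simp
  ultimately show "sum id S' = sum id S" using big by simp
  have MinS': "Min S' = sg" unfolding S'_def2 using fin le sgmn big
    by (intro Min_eqI) (auto, fastforce)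
  have mx1: "mx - 1 \<in> S'"
  proof (cases "sg = 1")
    case True then show ?thesis unfolding S'_def2 by simp
  next
    case False
    then have "mx - 1 \<in> S" using run[of 1] sg1 by simp
    moreover have "mx - 1 \<noteq> mx" using big by simp
    ultimately show ?thesis unfolding S'_def2 by simp
  qed
  have MaxS': "Max S' = mx - 1"
  proof (rule Max_eqI[OF finS' _ mx1])
    fix y assume "y \<in> S'"
    then have "y = mx - sg \<or> y = sg \<or> (y \<in> S \<and> y \<noteq> mx)" unfolding S'_def2 by auto
    then show "y \<le> mx - 1" using le[of y] big sg1 by auto
  qed
  have sigge: "sg \<le> sig S'"
  proof -
    have fS: "\<And>k. k < sg \<Longrightarrow> Max S' - k \<in> S'"
    proof -
      fix k assume k: "k < sg"
      show "Max S' - k \<in> S'"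
      proof (cases "k + 1 = sg")
        case True
        then have "Max S' - k = mx - sg" unfolding MaxS' using big by simp
        then show ?thesis unfolding S'_def2 by simp
      next
        case False
        then have "mx - (k+1) \<in> S" using run[of "k+1"] k by simp
        moreover have "Max S' - k = mx - (k+1)" unfolding MaxS' by simp
        moreover have "mx - (k+1) \<noteq> mx" using big k by simp
        ultimately show ?thesis unfolding S'_def2 by simp
      qed
    qed
    show ?thesis
    proof (rule ccontr)
      assume "\<not> sg \<le> sig S'"
      then have "sig S' < sg" by simp
      then have "Max S' - sig S' \<in> S'" using fS by blast
      moreover have "Max S' - sig S' \<notin> S'"
        using sig_props(1)[OF finS' \<open>S' \<noteq> {}\<close> \<open>0 \<notin> S'\<close>] .
      ultimately show False by simp
    qed
  qed
  have nexA: "Min S' \<noteq> Max S' - Min S' + 1" unfolding MinS' MaxS' using big by simp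
  have hback: "insert (Max S' + 1) (S' - {Min S', Max S' - Min S' + 1}) = S"
  proof -
    have e1: "Max S' + 1 = mx" unfolding MaxS' using big by simp
    have e2: "Max S' - Min S' + 1 = mx - sg" unfolding MaxS' MinS' using big by simp
    show ?thesis unfolding e1 e2 unfolding MinS' unfolding S'_def2 using mxS gap sgnot big by auto
  qed
  show "frank S' = S" unfolding frank_def using \<open>S' \<noteq> {}\<close> MinS' sigge nexA hback by auto
qed


lemma frank_D:
  assumes fin: "finite S" and z: "0 \<notin> S"
  shows "finite (frank S)" "0 \<notin> frank S" "sum id (frank S) = sum id S" "frank (frank S) = S"
proof -
  have "finite (frank S) \<and> 0 \<notin> frank S \<and> sum id (frank S) = sum id S \<and> frank (frank S) = S"
  proof (cases "S = {}")
    case True then show ?thesis by (simp add: frank_def)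
  next
    case ne: False
    show ?thesis
    proof (cases "Min S \<le> sig S")
      case A: True
      show ?thesis
      proof (cases "Min S = Max S - Min S + 1")
        case True then have "frank S = S" using ne A by (simp add: frank_def)
        then show ?thesis using fin z by simp
      next
        case False
        then have "frank S = insert (Max S + 1) (S - {Min S, Max S - Min S + 1})"
          using ne A by (simp add: frank_def)
        then show ?thesis using frank_A[OF fin ne z A False] by simp
      qed
    next
      case B: False
      show ?thesis
      proof (cases "S = {sig S + 1..2 * sig S}")
        case True then have "frank S = S" using ne B by (simp add: frank_def)
        then show ?thesis using fin z by simp
      next
        case False
        then have "frank S = insert (Max S - sig S) (insert (sig S) (S - {Max S}))"
          using ne B by (simp add: frank_def)
        then show ?thesis using frank_B[OF fin ne z B False] fin z by simp
      qed
    qed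
  qed
  then show "finite (frank S)" "0 \<notin> frank S" "sum id (frank S) = sum id S" "frank (frank S) = S"
    by auto
qed

definition Aset :: "nat \<Rightarrow> nat set" where "Aset s = {s..<2 * s}"
definition Bset :: "nat \<Rightarrow> nat set" where "Bset s = {s + 1..2 * s}"

lemma frank_fix:
  assumes fin: "finite S" and z: "0 \<notin> S"
  shows "frank S = S \<longleftrightarrow> (\<exists>s. S = Aset s) \<or> (\<exists>s\<ge>1. S = Bset s)"
proof
  assume fx: "frank S = S"
  show "(\<exists>s. S = Aset s) \<or> (\<exists>s\<ge>1. S = Bset s)"
  proof (cases "S = {}")
    case True then show ?thesis by (intro disjI1 exI[of _ 0]) (simp add: Aset_def)
  next
    case ne: False
    have sg1: "1 \<le> sig S" using sig_props(3)[OF fin ne z] .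
    show ?thesis
    proof (cases "Min S \<le> sig S")
      case A: True
      show ?thesis
      proof (cases "Min S = Max S - Min S + 1")
        case True
        define mn where "mn = Min S"
        have le: "\<And>y. y \<in> S \<Longrightarrow> mn \<le> y \<and> y \<le> Max S" using fin by (auto simp: mn_def)
        have mnS: "mn \<in> S" using fin ne by (simp add: mn_def)
        have "Min S \<le> Max S" using fin ne by simp
        then have mx: "Max S = 2 * mn - 1" using True unfolding mn_def by linarith
        have mn1: "mn \<ge> 1" using mnS z by (cases mn) auto
        have run: "\<And>k. k < mn \<Longrightarrow> Max S - k \<in> S" using sig_props(2)[OF fin ne z] A
          unfolding mn_def by auto
        have "S = Aset mn" unfolding Aset_def
        proof
          show "S \<subseteq> {mn..<2 * mn}" using le mx mn1 by fastforce
          show "{mn..<2 * mn} \<subseteq> S"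
          proof
            fix y assume y: "y \<in> {mn..<2 * mn}"
            then have "Max S - (Max S - y) = y" "Max S - y < mn" using mx by auto
            then show "y \<in> S" using run[of "Max S - y"] by simp
          qed
        qed
        then show ?thesis by blast
      next
        case False
        then have "frank S = insert (Max S + 1) (S - {Min S, Max S - Min S + 1})"
          using ne A by (simp add: frank_def)
        then have "Max S + 1 \<in> frank S" by (simp only: insertI1)
        then have "Max S + 1 \<in> S" by (simp only: fx)
        moreover have "Max S + 1 \<notin> S"
        proof
          assume "Max S + 1 \<in> S"
          then have "Max S + 1 \<le> Max S" using fin by simp
          then show False by simp
        qed
        ultimately show ?thesis by blast
      qed
    next
      case B: False
      show ?thesis
      proof (cases "S = {sig S + 1..2 * sig S}")
        case True then show ?thesis using sg1 unfolding Bset_def by blast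
      next
        case False
        then have "frank S = insert (Max S - sig S) (insert (sig S) (S - {Max S}))"
          using ne B by (simp add: frank_def)
        then have "sig S \<in> frank S" by (simp only: insert_iff simp_thms)
        then have "sig S \<in> S" by (simp only: fx)
        moreover have "sig S \<notin> S"
        proof
          assume "sig S \<in> S"
          then have "Min S \<le> sig S" using fin by simp
          then show False using B by simp
        qed
        ultimately show ?thesis by blast
      qed
    qed
  qed
next
  assume "(\<exists>s. S = Aset s) \<or> (\<exists>s\<ge>1. S = Bset s)"
  then show "frank S = S"
  proof
    assume "\<exists>s. S = Aset s"
    then obtain s where S: "S = Aset s" by auto
    show ?thesis
    proof (cases "s = 0")
      case True then show ?thesis using S by (simp add: Aset_def frank_def)
    next
      case False
      have ne: "S \<noteq> {}" using S False by (simp add: Aset_def)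
      have mx: "Max S = 2 * s - 1" unfolding S Aset_def using False
        by (intro Max_eqI) auto
      have mn: "Min S = s" unfolding S Aset_def using False
        by (intro Min_eqI) auto
      have sg: "sig S = s"
        by (rule sig_eq; unfold mx) (use False in \<open>auto simp: S Aset_def\<close>)
      show ?thesis unfolding frank_def using ne mx mn sg False by auto
    qed
  next
    assume "\<exists>s\<ge>1. S = Bset s"
    then obtain s where S: "S = Bset s" and s1: "s \<ge> 1" by auto
    have ne: "S \<noteq> {}" using S s1 by (simp add: Bset_def)
    have mx: "Max S = 2 * s" unfolding S Bset_def using s1
      by (intro Max_eqI) auto
    have mn: "Min S = s + 1" unfolding S Bset_def using s1
      by (intro Min_eqI) auto
    have sg: "sig S = s"
      by (rule sig_eq; unfold mx) (use s1 in \<open>auto simp: S Bset_def\<close>)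
    show ?thesis unfolding frank_def using ne mx mn sg s1 S Bset_def by auto
  qed
qed



definition vv :: "nat \<Rightarrow> nat \<Rightarrow> nat \<Rightarrow> nat" where "vv A t i = t + i * A"
definition jM :: "nat \<Rightarrow> nat \<Rightarrow> nat multiset \<Rightarrow> nat" where
  "jM A t M = (LEAST i. vv A t i \<notin># M)"

lemma mem_le_sum_mset: "(x::nat) \<in># M \<Longrightarrow> x \<le> sum_mset M"
  using sum_mset.remove[of x M] by simp

lemma vv_inj: "0 < A \<Longrightarrow> vv A t i = vv A t k \<longleftrightarrow> i = k"
  by (simp add: vv_def)

lemma vv_mono: "0 < A \<Longrightarrow> vv A t i \<le> vv A t k \<longleftrightarrow> i \<le> k"
  by (simp add: vv_def)

lemma jM_props:
  assumes "0 < A"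
  shows "vv A t (jM A t M) \<notin># M" "\<And>i. i < jM A t M \<Longrightarrow> vv A t i \<in># M"
proof -
  have "vv A t (sum_mset M + 1) > sum_mset M" using assms unfolding vv_def
    by (metis add.commute add_le_same_cancel2 le_add2 le_trans mult_le_mono2 nat_mult_1_right not_less_eq_eq
        Suc_eq_plus1 less_eq_Suc_le mult.commute)
  then have ex: "\<exists>i. vv A t i \<notin># M" using mem_le_sum_mset by (meson not_le)
  show "vv A t (jM A t M) \<notin># M" unfolding jM_def by (rule LeastI_ex[OF ex])
  show "\<And>i. i < jM A t M \<Longrightarrow> vv A t i \<in># M" unfolding jM_def using not_less_Least by blast
qed

lemma jM_eq:
  assumes "vv A t j \<notin># M" "\<And>i. i < j \<Longrightarrow> vv A t i \<in># M"
  shows "jM A t M = j"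
  unfolding jM_def by (rule Least_equality) (use assms in \<open>auto simp: not_le[symmetric]\<close>)

lemma mex_eq:
  assumes t: "0 < t" and m: "0 < m"
  shows "mex (m*t) t M = vv (m*t) t (jM (m*t) t M)"
proof -
  define A where "A = m * t"
  have A: "0 < A" "t \<le> A" using t m by (auto simp: A_def)
  have P: "(0 < k \<and> k mod A = t mod A \<and> k \<notin># M) \<longleftrightarrow> (\<exists>i. k = vv A t i \<and> vv A t i \<notin># M)" for k
  proof
    assume h: "0 < k \<and> k mod A = t mod A \<and> k \<notin># M"
    have tk: "t \<le> k"
    proof (rule ccontr)
      assume "\<not> t \<le> k"
      then have "k < A" "k mod A = k" using A by auto
      show False
      proof (cases "t < A")
        case True then show False using h \<open>k mod A = k\<close> \<open>\<not> t \<le> k\<close> by simp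
      next
        case False then have "t = A" using A by simp
        then show False using h \<open>k mod A = k\<close> by auto
      qed
    qed
    then have "A dvd k - t" using h mod_eq_dvd_iff_nat by blast
    then obtain i where "k - t = A * i" by blast
    then have "k = vv A t i" using tk unfolding vv_def by (simp add: mult.commute)
    then show "\<exists>i. k = vv A t i \<and> vv A t i \<notin># M" using h by blast
  next
    assume "\<exists>i. k = vv A t i \<and> vv A t i \<notin># M"
    then show "0 < k \<and> k mod A = t mod A \<and> k \<notin># M" using t by (auto simp: vv_def)
  qed
  have "mex A t M = (LEAST k. \<exists>i. k = vv A t i \<and> vv A t i \<notin># M)"
    unfolding mex_def using P by simp
  also have "\<dots> = vv A t (jM A t M)"
  proof (rule Least_equality)
    show "\<exists>i. vv A t (jM A t M) = vv A t i \<and> vv A t i \<notin># M" using jM_props[OF A(1)] by blast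
    fix y assume "\<exists>i. y = vv A t i \<and> vv A t i \<notin># M"
    then obtain i where "y = vv A t i" "vv A t i \<notin># M" by blast
    moreover have "jM A t M \<le> i" unfolding jM_def by (rule Least_le) fact
    ultimately show "vv A t (jM A t M) \<le> y" using vv_mono[OF A(1)] by simp
  qed
  finally show ?thesis unfolding A_def .
qed

lemma mex_cond:
  assumes t: "0 < t" and m: "0 < m"
  shows "mex (m*t) t M mod (2*(m*t)) = t mod (2*(m*t)) \<longleftrightarrow> even (jM (m*t) t M)"
proof -
  define A where "A = m * t"
  have A: "0 < A" "t \<le> A" using t m by (auto simp: A_def)
  define j where "j = jM A t M"
  have tm: "t mod (2*A) = t" using A by simp
  have "(t + j * A) mod (2*A) = t \<longleftrightarrow> even j"
  proof (cases "even j")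
    case True
    then obtain q where q: "j = 2 * q" by blast
    have "t + j * A = t + q * (2 * A)" unfolding q by simp
    then have "(t + j * A) mod (2*A) = t mod (2*A)" by (metis mod_mult_self1)
    then show ?thesis using tm True by simp
  next
    case False
    then obtain q where "j = 2 * q + 1" using oddE by blast
    then have "t + j * A = (t + A) + q * (2 * A)" by (simp add: algebra_simps)
    then have e: "(t + j * A) mod (2*A) = (t + A) mod (2*A)" by (metis mod_mult_self1)
    have "(t + A) mod (2*A) \<noteq> t"
    proof (cases "t + A < 2 * A")
      case True then show ?thesis using A by simp
    next
      case False then have "t + A = 2 * A" using A by simp
      then have "(t + A) mod (2*A) = 0" by (metis mod_self)
      then show ?thesis using t by simp
    qed
    then show ?thesis using e False by simp
  qed
  then show ?thesis using mex_eq[OF t m] tm unfolding A_def j_def vv_def by simp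
qed


definition avail :: "nat \<Rightarrow> nat \<Rightarrow> nat multiset \<Rightarrow> nat \<Rightarrow> nat" where
  "avail A t M x = count M x - (if \<exists>i<jM A t M. x = vv A t i then 1 else 0)"

definition Cs :: "nat \<Rightarrow> nat \<Rightarrow> nat set \<Rightarrow> nat multiset \<Rightarrow> nat set" where
  "Cs A t S M = {x. x \<noteq> vv A t (jM A t M) \<and> (x \<in> S \<or> 0 < avail A t M x)}"

definition tog :: "nat \<Rightarrow> nat \<Rightarrow> nat set \<times> nat multiset \<Rightarrow> nat set \<times> nat multiset" where
  "tog A t p = (if Cs A t (fst p) (snd p) = {} then p
     else if Min (Cs A t (fst p) (snd p)) \<in> fst p
       then (fst p - {Min (Cs A t (fst p) (snd p))}, add_mset (Min (Cs A t (fst p) (snd p))) (snd p))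
       else (insert (Min (Cs A t (fst p) (snd p))) (fst p), snd p - {#Min (Cs A t (fst p) (snd p))#}))"

definition XT :: "nat \<Rightarrow> nat \<Rightarrow> nat \<Rightarrow> (nat set \<times> nat multiset) set" where
  "XT A t n = {(S,M). finite S \<and> 0 \<notin> S \<and> (\<forall>x\<in>#M. 0 < x) \<and> even (jM A t M)
                \<and> sum id S + sum_mset M = n}"

lemma avail_mem: "0 < avail A t M x \<Longrightarrow> x \<in># M"
  unfolding avail_def by (metis count_greater_zero_iff gr_zeroI zero_diff)

lemma Cs_finite: "finite S \<Longrightarrow> finite (Cs A t S M)"
  by (rule finite_subset[of _ "S \<union> set_mset M"]) (auto simp: Cs_def dest: avail_mem)

lemma jM_add:
  assumes "0 < A" "x \<noteq> vv A t (jM A t M)"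
  shows "jM A t (add_mset x M) = jM A t M"
  by (rule jM_eq) (use assms jM_props[OF assms(1), where t=t and M=M] in auto)

lemma jM_del:
  assumes A: "0 < A" and x: "x \<noteq> vv A t (jM A t M)" and av: "0 < avail A t M x"
  shows "jM A t (M - {#x#}) = jM A t M"
proof (rule jM_eq)
  show "vv A t (jM A t M) \<notin># M - {#x#}" using jM_props(1)[OF A, of t M] by (meson in_diffD)
  fix i assume i: "i < jM A t M"
  show "vv A t i \<in># M - {#x#}"
  proof (cases "vv A t i = x")
    case True
    then have "\<exists>ia<jM A t M. x = vv A t ia" using i by auto
    then have "count M x \<ge> 2" using av unfolding avail_def by auto
    then show ?thesis using True by (simp add: count_greater_zero_iff[symmetric] del: count_greater_zero_iff)
  next
    case False
    then show ?thesis using jM_props(2)[OF A i] by (simp add: in_diff_count)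
  qed
qed

lemma tog_step:
  assumes A: "0 < A" and fin: "finite S" and ne: "Cs A t S M \<noteq> {}"
  defines "x \<equiv> Min (Cs A t S M)"
  defines "S' \<equiv> (if x \<in> S then S - {x} else insert x S)"
  defines "M' \<equiv> (if x \<in> S then add_mset x M else M - {#x#})"
  shows "tog A t (S, M) = (S', M')" "jM A t M' = jM A t M" "Cs A t S' M' = Cs A t S M"
    "x \<in> S \<or> x \<in># M" "x \<in> S \<Longrightarrow> x \<notin> S'" "x \<notin> S \<Longrightarrow> x \<in> S'"
proof -
  show "tog A t (S, M) = (S', M')" unfolding tog_def S'_def M'_def x_def using ne by simp
  have xC: "x \<in> Cs A t S M" unfolding x_def using Cs_finite[OF fin] ne by simp
  then have xv: "x \<noteq> vv A t (jM A t M)" and xa: "x \<in> S \<or> 0 < avail A t M x" unfolding Cs_def by auto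
  show jj: "jM A t M' = jM A t M"
  proof (cases "x \<in> S")
    case True then show ?thesis unfolding M'_def using jM_add[OF A xv] by simp
  next
    case False then have "0 < avail A t M x" using xa by simp
    then show ?thesis unfolding M'_def using jM_del[OF A xv] False by simp
  qed
  show "x \<in> S \<or> x \<in># M" using xa avail_mem by blast
  show "x \<in> S \<Longrightarrow> x \<notin> S'" "x \<notin> S \<Longrightarrow> x \<in> S'" unfolding S'_def by auto
  have avy: "avail A t M' y = avail A t M y" if "y \<noteq> x" for y
    unfolding avail_def jj unfolding M'_def using that by auto
  have avx: "x \<in> S \<Longrightarrow> 0 < avail A t M' x" unfolding avail_def jj unfolding M'_def
    using jM_props(2)[OF A, where t=t and M=M] by (auto simp: count_greater_zero_iff[symmetric] simp del: count_greater_zero_iff)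
  show "Cs A t S' M' = Cs A t S M"
  proof (intro set_eqI iffI)
    fix y assume y: "y \<in> Cs A t S' M'"
    show "y \<in> Cs A t S M"
    proof (cases "y = x")
      case True then show ?thesis using xC by simp
    next
      case False then show ?thesis using y avy[OF False] unfolding Cs_def jj unfolding S'_def by (auto split: if_splits)
    qed
  next
    fix y assume y: "y \<in> Cs A t S M"
    show "y \<in> Cs A t S' M'"
    proof (cases "y = x")
      case True
      then show ?thesis using xv avx unfolding Cs_def jj unfolding S'_def by (auto split: if_splits)
    next
      case False then show ?thesis using y avy[OF False] unfolding Cs_def jj unfolding S'_def by (auto split: if_splits)
    qed
  qed
qed

lemma tog_XT:
  assumes A: "0 < A" and p: "p \<in> XT A t n"
  shows "tog A t p \<in> XT A t n" "tog A t (tog A t p) = p"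
proof -
  obtain S M where pe: "p = (S, M)" by fastforce
  have fin: "finite S" and z: "0 \<notin> S" and pos: "\<forall>x\<in>#M. 0 < x" and ev: "even (jM A t M)"
    and sm: "sum id S + sum_mset M = n" using p unfolding pe XT_def by auto
  have "tog A t p \<in> XT A t n \<and> tog A t (tog A t p) = p"
  proof (cases "Cs A t S M = {}")
    case True then show ?thesis using p unfolding pe tog_def by simp
  next
    case ne: False
    define x where "x = Min (Cs A t S M)"
    note st = tog_step[OF A fin ne]
    show ?thesis
    proof (cases "x \<in> S")
      case True
      have e: "tog A t p = (S - {x}, add_mset x M)" using st(1) True unfolding pe x_def by simp
      have fin': "finite (S - {x})" using fin by simp
      have ne': "Cs A t (S - {x}) (add_mset x M) \<noteq> {}" using st(3) True ne unfolding x_def by simp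
      have min': "Min (Cs A t (S - {x}) (add_mset x M)) = x" using st(3) True unfolding x_def by simp
      have "tog A t (S - {x}, add_mset x M) = (S, M)"
        using tog_step(1)[OF A fin' ne'] min' True by (simp add: insert_absorb)
      moreover have "(S - {x}, add_mset x M) \<in> XT A t n"
      proof -
        have x0: "0 < x" using True z by (metis gr0I)
        show ?thesis unfolding XT_def using fin z pos ev sm st(2) True z x0
        by (auto simp: x_def sum_diff1_nat[symmetric] sum.remove[OF fin True])
      qed
      ultimately show ?thesis using e pe by simp
    next
      case False
      have xM: "x \<in># M" using st(4) False unfolding x_def by simp
      have e: "tog A t p = (insert x S, M - {#x#})" using st(1) False unfolding pe x_def by simp
      have fin': "finite (insert x S)" using fin by simp
      have ne': "Cs A t (insert x S) (M - {#x#}) \<noteq> {}" using st(3) False ne unfolding x_def by simp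
      have min': "Min (Cs A t (insert x S) (M - {#x#})) = x" using st(3) False unfolding x_def by simp
      have "tog A t (insert x S, M - {#x#}) = (S, M)"
        using tog_step(1)[OF A fin' ne'] min' False xM by simp
      moreover have "(insert x S, M - {#x#}) \<in> XT A t n"
      proof -
        have "sum_mset M = x + sum_mset (M - {#x#})" using sum_mset.remove[OF xM] .
        moreover have "0 < x" using pos xM by blast
        moreover have "\<forall>y\<in>#M - {#x#}. 0 < y" using pos by (meson in_diffD)
        ultimately show ?thesis unfolding XT_def using fin z ev sm st(2) False
          by (auto simp: x_def)
      qed
      ultimately show ?thesis using e pe by simp
    qed
  qed
  then show "tog A t p \<in> XT A t n" "tog A t (tog A t p) = p" by auto
qed


definition base :: "nat \<Rightarrow> nat \<Rightarrow> nat \<Rightarrow> nat multiset" where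
  "base A t j = mset (map (vv A t) [0..<j])"

definition TT :: "nat \<Rightarrow> nat \<Rightarrow> nat \<Rightarrow> nat" where
  "TT A t k = (\<Sum>i<k. vv A t i)"

lemma count_base:
  assumes "0 < A"
  shows "count (base A t j) x = (if \<exists>i<j. x = vv A t i then 1 else 0)"
proof -
  have "distinct (map (vv A t) [0..<j])" using assms by (simp add: distinct_map inj_on_def vv_inj)
  then show ?thesis unfolding base_def distinct_count_atmost_1 by auto
qed

lemma sum_base: "sum_mset (base A t j) = TT A t j"
  unfolding base_def TT_def sum_mset_sum_list interv_sum_list_conv_sum_set_nat
  by (simp add: atLeast0LessThan)

lemma jM_base:
  assumes "0 < A" shows "jM A t (base A t j) = j"
  by (rule jM_eq) (auto simp: count_base[OF assms] vv_inj[OF assms] count_greater_zero_iff[symmetric] simp del: count_greater_zero_iff)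

lemma TT_Suc: "TT A t (Suc k) = TT A t k + vv A t k"
  unfolding TT_def by simp

lemma TT_mono: assumes "0 < t" shows "strict_mono (TT A t)"
  by (rule strict_monoI_Suc) (use assms in \<open>simp add: TT_Suc vv_def\<close>)

lemma fix_char:
  assumes A: "0 < A" and C: "Cs A t S M = {}"
  shows "S \<subseteq> {vv A t (jM A t M)}" "M = base A t (jM A t M)"
proof -
  define j where "j = jM A t M"
  have h: "\<And>x. x \<noteq> vv A t j \<Longrightarrow> x \<notin> S \<and> avail A t M x = 0" using C unfolding Cs_def j_def by auto
  then show "S \<subseteq> {vv A t (jM A t M)}" unfolding j_def by auto
  show "M = base A t (jM A t M)" unfolding j_def[symmetric]
  proof (rule multiset_eqI)
    fix x
    show "count M x = count (base A t j) x"
    proof (cases "x = vv A t j")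
      case True
      then have "count M x = 0" using jM_props(1)[OF A, where t=t and M=M] unfolding j_def by (simp add: not_in_iff)
      then show ?thesis using True by (simp add: count_base[OF A] vv_inj[OF A])
    next
      case False
      then have av: "avail A t M x = 0" using h by blast
      show ?thesis
      proof (cases "\<exists>i<j. x = vv A t i")
        case True
        then obtain i where "i < j" "x = vv A t i" by blast
        then have "x \<in># M" using jM_props(2)[OF A, where t=t and M=M] unfolding j_def by blast
        then have c1: "0 < count M x" by simp
        have "avail A t M x = count M x - 1" using True unfolding avail_def j_def by simp
        then have "count M x = 1" using c1 av by linarith
        then show ?thesis using True by (simp add: count_base[OF A])
      next
        case False
        have "avail A t M x = count M x" using False unfolding avail_def j_def by auto
        then have "count M x = 0" using av by simp
        then show ?thesis using False by (simp add: count_base[OF A])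
      qed
    qed
  qed
qed

lemma base_mem: "x \<in># base A t k \<Longrightarrow> 0 < t \<Longrightarrow> 0 < x"
  by (auto simp: base_def vv_def)

definition pt :: "nat \<Rightarrow> nat \<Rightarrow> nat \<Rightarrow> nat set \<times> nat multiset" where
  "pt A t k = (if even k then ({}, base A t k) else ({vv A t (k - 1)}, base A t (k - 1)))"

lemma Cs_base_empty:
  assumes A: "0 < A" and S: "S \<subseteq> {vv A t j}"
  shows "Cs A t S (base A t j) = {}"
  using S unfolding Cs_def avail_def jM_base[OF A] by (auto simp: count_base[OF A])

lemma pt_fix:
  assumes A: "0 < A" and t: "0 < t" and k: "TT A t k = n"
  shows "pt A t k \<in> XT A t n" "tog A t (pt A t k) = pt A t k"
proof -
  have "pt A t k \<in> XT A t n \<and> Cs A t (fst (pt A t k)) (snd (pt A t k)) = {}"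
  proof (cases "even k")
    case True
    then show ?thesis unfolding pt_def XT_def using k t
      by (auto simp: jM_base[OF A] sum_base Cs_base_empty[OF A] count_base[OF A] vv_def dest: base_mem)
  next
    case False
    then obtain j where j: "k = Suc j" by (cases k) auto
    then have ej: "even j" using False by simp
    have "TT A t k = vv A t j + TT A t j" using j TT_Suc by simp
    then show ?thesis unfolding pt_def XT_def using k t ej j False
      by (auto simp: jM_base[OF A] sum_base Cs_base_empty[OF A] count_base[OF A] vv_def dest: base_mem)
  qed
  then show "pt A t k \<in> XT A t n" "tog A t (pt A t k) = pt A t k" unfolding tog_def by auto
qed

lemma fix_is_pt:
  assumes A: "0 < A" and p: "p \<in> XT A t n" and f: "tog A t p = p"
  shows "\<exists>k. TT A t k = n \<and> p = pt A t k"
proof -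
  obtain S M where pe: "p = (S, M)" by fastforce
  have fin: "finite S" using p pe unfolding XT_def by auto
  have C: "Cs A t S M = {}"
  proof (rule ccontr)
    assume ne: "Cs A t S M \<noteq> {}"
    note st = tog_step[OF A fin ne]
    have "fst (tog A t p) = S" using f pe by simp
    then show False using st(1,5,6) pe by (cases "Min (Cs A t S M) \<in> S") auto
  qed
  define j where "j = jM A t M"
  have S: "S \<subseteq> {vv A t j}" and M: "M = base A t j" using fix_char[OF A C] unfolding j_def by auto
  have ev: "even j" and sm: "sum id S + sum_mset M = n" using p pe unfolding XT_def j_def by auto
  show ?thesis
  proof (cases "S = {}")
    case True
    then have "TT A t j = n" "p = pt A t j" using sm M ev pe by (auto simp: sum_base pt_def)
    then show ?thesis by blast
  next
    case False
    then have S1: "S = {vv A t j}" using S by auto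
    then have "TT A t (Suc j) = n" using sm M by (simp add: sum_base TT_Suc)
    moreover have "p = pt A t (Suc j)" using S1 M ev pe by (simp add: pt_def)
    ultimately show ?thesis by blast
  qed
qed

lemma tog_fix_card:
  assumes A: "0 < A" and t: "0 < t"
  shows "card {p \<in> XT A t n. tog A t p = p} = (if \<exists>k. TT A t k = n then 1 else 0)"
proof (cases "\<exists>k. TT A t k = n")
  case True
  then obtain k where k: "TT A t k = n" by blast
  have "{p \<in> XT A t n. tog A t p = p} = {pt A t k}"
  proof
    show "{pt A t k} \<subseteq> {p \<in> XT A t n. tog A t p = p}" using pt_fix[OF A t k] by auto
    show "{p \<in> XT A t n. tog A t p = p} \<subseteq> {pt A t k}"
    proof
      fix p assume "p \<in> {p \<in> XT A t n. tog A t p = p}"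
      then obtain k' where "TT A t k' = n" "p = pt A t k'" using fix_is_pt[OF A] by blast
      moreover have "k' = k" using k \<open>TT A t k' = n\<close> strict_mono_eq[OF TT_mono[OF t]] by metis
      ultimately show "p \<in> {pt A t k}" by simp
    qed
  qed
  then show ?thesis using True by simp
next
  case False
  then have e: "{p \<in> XT A t n. tog A t p = p} = {}" using fix_is_pt[OF A] by blast
  show ?thesis unfolding e using False by simp
qed



lemma sum_shift_id: "sum id {c..<c+s} = (\<Sum>i<s. i + (c::nat))"
  by (induction s) (auto simp: add.commute)

lemma two_sum_shift: "2 * (\<Sum>i<s. i + c) = s * (s - 1) + 2 * s * (c::nat)"
proof (induction s)
  case 0 then show ?case by simp
next
  case (Suc s) then show ?case by (cases s) (auto simp: algebra_simps)
qed

lemma int_half: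
  assumes "2 * X = s * (s - 1) + 2 * s * (s + c)" and "c \<le> 1"
  shows "int X = int s * (3 * int s - 1 + 2 * int c) div 2"
proof -
  have "int (2 * X) = int (s * (s - 1) + 2 * s * (s + c))" using assms(1) by simp
  also have "\<dots> = int s * (3 * int s - 1 + 2 * int c)"
    by (cases s) (simp_all add: algebra_simps)
  finally have "2 * int X = int s * (3 * int s - 1 + 2 * int c)" by simp
  then show ?thesis by simp
qed

lemma sum_Aset: "int (sum id (Aset s)) = int s * (3 * int s - 1) div 2"
proof -
  have "Aset s = {s..<s+s}" unfolding Aset_def by (simp add: mult_2)
  then have e1: "sum id (Aset s) = (\<Sum>i<s. i + s)" by (simp only: sum_shift_id)
  have "2 * sum id (Aset s) = s * (s - 1) + 2 * s * (s + 0)" unfolding e1 using two_sum_shift[of s s] by simp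
  from int_half[OF this] show ?thesis by simp
qed

lemma sum_Bset: "int (sum id (Bset s)) = int s * (3 * int s + 1) div 2"
proof -
  have "Bset s = {(s+1)..<(s+1)+s}" unfolding Bset_def by auto
  then have e1: "sum id (Bset s) = (\<Sum>i<s. i + (s+1))" by (simp only: sum_shift_id)
  have "2 * sum id (Bset s) = s * (s - 1) + 2 * s * (s + 1)" unfolding e1 by (rule two_sum_shift)
  from int_half[OF this] show ?thesis by (simp add: algebra_simps)
qed

lemma TT_formula: "2 * int (TT A t k) = int A * int k * (int k - 1) + 2 * int k * int t"
proof (induction k)
  case 0 then show ?case by (simp add: TT_def)
next
  case (Suc k) then show ?case by (simp add: TT_Suc vv_def algebra_simps)
qed

lemma size_le_sum_mset: "(\<forall>x\<in>#M. 0 < (x::nat)) \<Longrightarrow> size M \<le> sum_mset M"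
  by (induction M) (auto simp: Suc_le_eq)

lemma XT_finite: "finite (XT A t n)"
proof -
  have "XT A t n \<subseteq> Pow {0..n} \<times> (\<Union>k\<in>{0..n}. multisets_of_size {0..n} k)"
  proof
    fix p assume p: "p \<in> XT A t n"
    obtain S M where pe: "p = (S, M)" by fastforce
    have fin: "finite S" and pos: "\<forall>x\<in>#M. 0 < x" and sm: "sum id S + sum_mset M = n"
      using p pe unfolding XT_def by auto
    have "S \<subseteq> {0..n}"
    proof
      fix x assume "x \<in> S"
      then have "id x \<le> sum id S" using fin by (intro member_le_sum) auto
      then show "x \<in> {0..n}" using sm by simp
    qed
    moreover have "set_mset M \<subseteq> {0..n}" using mem_le_sum_mset sm by fastforce
    moreover have "size M \<le> n" using size_le_sum_mset[OF pos] sm by simp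
    ultimately show "p \<in> Pow {0..n} \<times> (\<Union>k\<in>{0..n}. multisets_of_size {0..n} k)"
      unfolding pe multisets_of_size_def by auto
  qed
  moreover have "finite (Pow {0..n} \<times> (\<Union>k\<in>{0..n}. multisets_of_size {0..n} k))" by auto
  ultimately show ?thesis by (rule finite_subset)
qed


definition FF :: "nat set \<times> nat multiset \<Rightarrow> nat set \<times> nat multiset" where
  "FF p = (frank (fst p), snd p)"

lemma FF_XT:
  assumes "p \<in> XT A t n"
  shows "FF p \<in> XT A t n" "FF (FF p) = p"
proof -
  obtain S M where pe: "p = (S, M)" by fastforce
  have fin: "finite S" and z: "0 \<notin> S" using assms pe unfolding XT_def by auto
  note fd = frank_D[OF fin z]
  show "FF p \<in> XT A t n" using assms fd unfolding pe FF_def XT_def by auto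
  show "FF (FF p) = p" using fd unfolding pe FF_def by simp
qed

definition GG :: "nat \<Rightarrow> nat \<Rightarrow> nat \<Rightarrow> nat set \<Rightarrow> nat multiset set" where
  "GG A t n S = {M. (\<forall>x\<in>#M. 0 < x) \<and> even (jM A t M) \<and> sum id S + sum_mset M = n}"

lemma Aset_props: "finite (Aset s)" "0 \<notin> Aset s" "card (Aset s) = s"
  by (auto simp: Aset_def)

lemma Bset_props: "finite (Bset s)" "0 \<notin> Bset s" "card (Bset s) = s"
  by (auto simp: Bset_def)

lemma FixF_eq:
  "{p \<in> XT A t n. FF p = p} = Sigma (Aset ` {0..n} \<union> Bset ` {1..n}) (GG A t n)"
proof
  show "{p \<in> XT A t n. FF p = p} \<subseteq> Sigma (Aset ` {0..n} \<union> Bset ` {1..n}) (GG A t n)"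
  proof
    fix p assume p: "p \<in> {p \<in> XT A t n. FF p = p}"
    obtain S M where pe: "p = (S, M)" by fastforce
    have fin: "finite S" and z: "0 \<notin> S" and sm: "sum id S + sum_mset M = n"
      and fx: "frank S = S" using p pe unfolding XT_def FF_def by auto
    have le: "\<And>x. x \<in> S \<Longrightarrow> x \<le> n"
    proof -
      fix x assume "x \<in> S"
      then have "id x \<le> sum id S" using fin by (intro member_le_sum) auto
      then show "x \<le> n" using sm by simp
    qed
    have "S \<in> Aset ` {0..n} \<union> Bset ` {1..n}"
    proof -
      have "(\<exists>s. S = Aset s) \<or> (\<exists>s\<ge>1. S = Bset s)" using frank_fix[OF fin z] fx by simp
      then show ?thesis
      proof
        assume "\<exists>s. S = Aset s"
        then obtain s where S: "S = Aset s" by blast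
        have "s \<le> n"
        proof (cases "s = 0")
          case False then have "s \<in> S" unfolding S Aset_def by simp
          then show ?thesis using le by blast
        qed simp
        then show ?thesis using S by auto
      next
        assume "\<exists>s\<ge>1. S = Bset s"
        then obtain s where S: "S = Bset s" and s1: "s \<ge> 1" by blast
        have "s + 1 \<in> S" unfolding S Bset_def using s1 by simp
        then have "s \<le> n" using le by fastforce
        then show ?thesis using S s1 by auto
      qed
    qed
    moreover have "M \<in> GG A t n S" using p pe unfolding XT_def GG_def by auto
    ultimately show "p \<in> Sigma (Aset ` {0..n} \<union> Bset ` {1..n}) (GG A t n)" using pe by simp
  qed
next
  show "Sigma (Aset ` {0..n} \<union> Bset ` {1..n}) (GG A t n) \<subseteq> {p \<in> XT A t n. FF p = p}"
  proof
    fix p assume p: "p \<in> Sigma (Aset ` {0..n} \<union> Bset ` {1..n}) (GG A t n)"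
    obtain S M where pe: "p = (S, M)" by fastforce
    have S: "S \<in> Aset ` {0..n} \<union> Bset ` {1..n}" and M: "M \<in> GG A t n S" using p pe by auto
    have fin: "finite S" and z: "0 \<notin> S" using S Aset_props Bset_props by auto
    have "frank S = S" using S frank_fix[OF fin z] by auto
    then show "p \<in> {p \<in> XT A t n. FF p = p}" using M fin z pe unfolding XT_def GG_def FF_def by auto
  qed
qed

lemma GG_finite:
  assumes "finite S" "0 \<notin> S" shows "finite (GG A t n S)"
proof -
  have "GG A t n S \<subseteq> snd ` XT A t n"
  proof
    fix M assume "M \<in> GG A t n S"
    then have "(S, M) \<in> XT A t n" using assms unfolding GG_def XT_def by simp
    then show "M \<in> snd ` XT A t n" by (rule image_eqI[rotated]) simp
  qed
  then show ?thesis using XT_finite finite_surj by blast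
qed

lemma GG_card0:
  assumes t: "0 < t" and m: "0 < m"
  shows "card {M. (\<forall>x\<in>#M. 0 < x) \<and> even (jM (m*t) t M) \<and> a + sum_mset M = n}
     = p_mex (m*t) t (int n - int a)"
proof (cases "a \<le> n")
  case True
  then have na: "nat (int n - int a) = n - a" by simp
  have "{M. (\<forall>x\<in>#M. 0 < x) \<and> even (jM (m*t) t M) \<and> a + sum_mset M = n}
     = {M \<in> partitions (n - a). mex (m*t) t M mod (2*(m*t)) = t mod (2*(m*t))}"
    unfolding partitions_def mex_cond[OF t m] using True by auto
  then show ?thesis unfolding p_mex_def na using True by simp
next
  case False
  then have "{M. (\<forall>x\<in>#M. 0 < x) \<and> even (jM (m*t) t M) \<and> a + sum_mset M = n} = {}" by auto
  then show ?thesis unfolding p_mex_def using False by simp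
qed

lemma GG_card:
  assumes t: "0 < t" and m: "0 < m"
  shows "card (GG (m*t) t n S) = p_mex (m*t) t (int n - int (sum id S))"
  unfolding GG_def by (rule GG_card0[OF t m])

lemma FixF_card:
  assumes t: "0 < t" and m: "0 < m"
  shows "card {p \<in> XT (m*t) t n. FF p = p} =
    (\<Sum>s\<in>{0..n}. p_mex (m*t) t (int n - int s * (3 * int s - 1) div 2))
        + (\<Sum>s\<in>{1..n}. p_mex (m*t) t (int n - int s * (3 * int s + 1) div 2))"
proof -
  have fin: "finite (Aset ` {0..n} \<union> Bset ` {1..n})" by simp
  have finG: "\<forall>S\<in>Aset ` {0..n} \<union> Bset ` {1..n}. finite (GG (m*t) t n S)"
    using GG_finite Aset_props Bset_props by auto
  have disj: "Aset ` {0..n} \<inter> Bset ` {1..n} = {}"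
  proof (rule ccontr)
    assume "Aset ` {0..n} \<inter> Bset ` {1..n} \<noteq> {}"
    then obtain s s' where "Aset s = Bset s'" "s' \<ge> 1" by auto
    moreover have "s = s'" using calculation(1) Aset_props(3)[of s] Bset_props(3)[of s'] by metis
    ultimately have "s \<in> Bset s" "s \<notin> Bset s" unfolding Aset_def Bset_def by auto
    then show False by blast
  qed
  have injA: "inj_on Aset {0..n}" by (rule inj_onI) (metis Aset_props(3))
  have injB: "inj_on Bset {1..n}" by (rule inj_onI) (metis Bset_props(3))
  have "card {p \<in> XT (m*t) t n. FF p = p} = (\<Sum>S\<in>Aset ` {0..n} \<union> Bset ` {1..n}. card (GG (m*t) t n S))"
    unfolding FixF_eq using card_SigmaI[OF fin finG] .
  also have "\<dots> = (\<Sum>S\<in>Aset ` {0..n}. card (GG (m*t) t n S)) + (\<Sum>S\<in>Bset ` {1..n}. card (GG (m*t) t n S))"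
    by (rule sum.union_disjoint) (use disj in auto)
  also have "\<dots> = (\<Sum>s\<in>{0..n}. card (GG (m*t) t n (Aset s))) + (\<Sum>s\<in>{1..n}. card (GG (m*t) t n (Bset s)))"
    by (simp only: sum.reindex[OF injA] sum.reindex[OF injB] o_def)
  also have "\<dots> = (\<Sum>s\<in>{0..n}. p_mex (m*t) t (int n - int s * (3 * int s - 1) div 2))
        + (\<Sum>s\<in>{1..n}. p_mex (m*t) t (int n - int s * (3 * int s + 1) div 2))"
    by (simp only: GG_card[OF t m] sum_Aset sum_Bset)
  finally show ?thesis .
qed

theorem lemma2p2:
  fixes t m n :: nat
  assumes "0 < t" and "0 < m" and "0 < n"
  shows "((\<Sum>s\<in>{0..n}. p_mex (m*t) t (int n - int s * (3 * int s - 1) div 2))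
        + (\<Sum>s\<in>{1..n}. p_mex (m*t) t (int n - int s * (3 * int s + 1) div 2))) mod 2
       = (if \<exists>k::nat. 0 < k \<and> 2 * int n = (int m * int k^2 - (int m - 2) * int k) * int t
          then 1 else 0)"
proof -
  define A where "A = m * t"
  have A0: "0 < A" using assms by (simp add: A_def)
  have "card {p \<in> XT A t n. FF p = p} mod 2 = card (XT A t n) mod 2"
    by (rule inv_parity[OF XT_finite, symmetric]) (use FF_XT in auto)
  also have "\<dots> = card {p \<in> XT A t n. tog A t p = p} mod 2"
    by (rule inv_parity[OF XT_finite]) (use tog_XT[OF A0] in auto)
  also have "\<dots> = (if \<exists>k. TT A t k = n then 1 else 0)"
    using tog_fix_card[OF A0 assms(1)] by simp
  finally have main: "card {p \<in> XT A t n. FF p = p} mod 2 = (if \<exists>k. TT A t k = n then 1 else 0)" .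
  have eqv: "(\<exists>k. TT A t k = n) \<longleftrightarrow>
      (\<exists>k::nat. 0 < k \<and> 2 * int n = (int m * int k^2 - (int m - 2) * int k) * int t)"
  proof -
    have "TT A t k = n \<longleftrightarrow> 2 * int n = (int m * int k^2 - (int m - 2) * int k) * int t" for k
    proof -
      have "(int m * int k^2 - (int m - 2) * int k) * int t = int A * int k * (int k - 1) + 2 * int k * int t"
        unfolding A_def by (simp add: algebra_simps power2_eq_square)
      then show ?thesis using TT_formula[of A t k] by linarith
    qed
    note kk = this
    have T0: "TT A t 0 = 0" by (simp add: TT_def)
    show ?thesis
    proof
      assume "\<exists>k. TT A t k = n"
      then obtain k where k: "TT A t k = n" by blast
      have "k \<noteq> 0"
      proof
        assume "k = 0" then show False using T0 k assms(3) by simp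
      qed
      then show "\<exists>k::nat. 0 < k \<and> 2 * int n = (int m * int k^2 - (int m - 2) * int k) * int t"
        using kk k by blast
    next
      assume "\<exists>k::nat. 0 < k \<and> 2 * int n = (int m * int k^2 - (int m - 2) * int k) * int t"
      then show "\<exists>k. TT A t k = n" using kk by blast
    qed
  qed
  have m2: "card {p \<in> XT (m*t) t n. FF p = p} mod 2 =
    (if \<exists>k::nat. 0 < k \<and> 2 * int n = (int m * int k^2 - (int m - 2) * int k) * int t then 1 else 0)"
    using main[unfolded eqv] unfolding A_def .
  have L: "(\<Sum>s\<in>{0..n}. p_mex (m*t) t (int n - int s * (3 * int s - 1) div 2))
        + (\<Sum>s\<in>{1..n}. p_mex (m*t) t (int n - int s * (3 * int s + 1) div 2))
       = card {p \<in> XT (m*t) t n. FF p = p}"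
    by (rule FixF_card[OF assms(1,2), symmetric])
  show ?thesis unfolding L by (rule m2)
qed

end
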